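(* Let $L\ge1$ and let $\tilde\eta_L:\mathbb{R}^2\to[0,1]$ be a smooth function depending only on $x_2$, with all derivatives bounded, and supported in $\{x\in E:\ x_2>\sqrt L/4\}$ (extended by zero to $x_2<0$). Then for every $\psi\in D(H_b)$, the function $\tilde\eta_L\psi$ (restricted to $E$) lies in $D(H_b^E)$ and $$H_b^E\,\tilde\eta_L\psi=H_b\,\tilde\eta_L\psi.$$
   Context: $E=\mathbb{R}\times[0,\infty)$; $\sigma=(\sigma_1,\sigma_2)$ with Pauli matrices $\sigma_1=\begin{pmatrix}0&1\\1&0\end{pmatrix}$, $\sigma_2=\begin{pmatrix}0&-\mathrm{i}\\ \mathrm{i}&0\end{pmatrix}$; $\tilde A(x)=(-x_2,0)$; $b\ge0$. $H_b$ is the self-adjoint closure of $(-\mathrm{i}\nabla-b\tilde A)\cdot\sigma$ on $C_0^\infty(\mathbb{R}^2,\mathbb{C}^2)$ in $L^2(\mathbb{R}^2,\mathbb{C}^2)$. With $\mathscr S_+$ the restrictions to $E$ of Schwartz functions on $\mathbb{R}^2$ and $\mathscr M=\{\psi=(\psi_1,\psi_2)\in\mathscr S_+\oplus\mathscr S_+:\ \psi_1(x_1,0)=\psi_2(x_1,0)\ \forall x_1,\ \forall\alpha\ \exists c,C>0:\ |\partial^\alpha\psi(x)|\le C\mathrm{e}^{-c|x|}\}$, $H_b^E$ is the closure of $(-\mathrm{i}\nabla-b\tilde A)\cdot\sigma$ on $\mathscr M$ in $L^2(E,\mathbb{C}^2)$. *)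

theory Defs
  imports "HOL-Analysis.Analysis"
begin

type_synonym pt = "real \<times> real"
type_synonym spinor = "complex \<times> complex"

definition halfplane :: "pt set" where
  "halfplane = {x. snd x \<ge> 0}"

(* partial derivatives of a function on R^2 (True = d/dx1, False = d/dx2) *)
definition pd :: "bool \<Rightarrow> (pt \<Rightarrow> 'b::real_normed_vector) \<Rightarrow> pt \<Rightarrow> 'b" where
  "pd i f x = (if i then vector_derivative (\<lambda>t. f (t, snd x)) (at (fst x))
               else vector_derivative (\<lambda>t. f (fst x, t)) (at (snd x)))"

fun iter_pd :: "bool list \<Rightarrow> (pt \<Rightarrow> 'b::real_normed_vector) \<Rightarrow> pt \<Rightarrow> 'b" where
  "iter_pd [] f = f"
| "iter_pd (i # ds) f = pd i (iter_pd ds f)"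

definition smooth :: "(pt \<Rightarrow> 'b::real_normed_vector) \<Rightarrow> bool" where
  "smooth f \<longleftrightarrow> (\<forall>ds. iter_pd ds f differentiable_on UNIV)"

definition C0inf :: "(pt \<Rightarrow> spinor) \<Rightarrow> bool" where
  "C0inf f \<longleftrightarrow> smooth f \<and> bounded {x. f x \<noteq> 0}"

definition schwartz :: "(pt \<Rightarrow> spinor) \<Rightarrow> bool" where
  "schwartz f \<longleftrightarrow> smooth f \<and>
     (\<forall>ds k. \<exists>C. \<forall>x. (1 + norm x) ^ k * norm (iter_pd ds f x) \<le> C)"

(* Phi is a Schwartz function on R^2 whose restriction to E lies in the core M *)
definition inM :: "(pt \<Rightarrow> spinor) \<Rightarrow> bool" where
  "inM f \<longleftrightarrow> schwartz f \<and>
     (\<forall>x1. fst (f (x1, 0)) = snd (f (x1, 0))) \<and>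
     (\<forall>ds. \<exists>c>0. \<exists>C>0. \<forall>x\<in>halfplane. norm (iter_pd ds f x) \<le> C * exp (- c * norm x))"

(* the differential expression (-i nabla - b A~).sigma, A~(x) = (-x2, 0) *)
definition dirac :: "real \<Rightarrow> (pt \<Rightarrow> spinor) \<Rightarrow> pt \<Rightarrow> spinor" where
  "dirac b f x =
     (let u = (\<lambda>y. fst (f y)); v = (\<lambda>y. snd (f y)); x2 = complex_of_real (b * snd x) in
      (- \<i> * pd True v x + x2 * v x - pd False v x,
       - \<i> * pd True u x + x2 * u x + pd False u x))"

definition L2 :: "pt set \<Rightarrow> (pt \<Rightarrow> spinor) \<Rightarrow> bool" where
  "L2 S f \<longleftrightarrow> set_borel_measurable lborel S f \<and>
     set_integrable lborel S (\<lambda>x. (norm (f x))\<^sup>2)"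

definition l2conv :: "pt set \<Rightarrow> (nat \<Rightarrow> pt \<Rightarrow> spinor) \<Rightarrow> (pt \<Rightarrow> spinor) \<Rightarrow> bool" where
  "l2conv S fs f \<longleftrightarrow>
     (\<forall>n. set_integrable lborel S (\<lambda>x. (norm (fs n x - f x))\<^sup>2)) \<and>
     (\<lambda>n. set_lebesgue_integral lborel S (\<lambda>x. (norm (fs n x - f x))\<^sup>2)) \<longlonglongrightarrow> 0"

(* (psi, g) lies in the graph of H_b = closure of dirac b on C_0^infinity in L^2(R^2,C^2) *)
definition Hb_graph :: "real \<Rightarrow> (pt \<Rightarrow> spinor) \<Rightarrow> (pt \<Rightarrow> spinor) \<Rightarrow> bool" where
  "Hb_graph b psi g \<longleftrightarrow> L2 UNIV psi \<and> L2 UNIV g \<and>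
     (\<exists>phi. (\<forall>n. C0inf (phi n)) \<and> l2conv UNIV phi psi \<and>
            l2conv UNIV (\<lambda>n. dirac b (phi n)) g)"

(* (psi|_E, g|_E) lies in the graph of H_b^E = closure of dirac b on M in L^2(E,C^2);
   only values on E matter *)
definition HbE_graph :: "real \<Rightarrow> (pt \<Rightarrow> spinor) \<Rightarrow> (pt \<Rightarrow> spinor) \<Rightarrow> bool" where
  "HbE_graph b psi g \<longleftrightarrow> L2 halfplane psi \<and> L2 halfplane g \<and>
     (\<exists>phi. (\<forall>n. inM (phi n)) \<and> l2conv halfplane phi psi \<and>
            l2conv halfplane (\<lambda>n. dirac b (phi n)) g)"

end

theory Submission
  imports Defs
begin


lemma pd_has_derivative:
  assumes "(f has_derivative D) (at x)"
  shows "pd i f x = D (if i then (1,0) else (0,1))"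
proof -
  have lin: "linear D" using assms has_derivative_linear by blast
  show ?thesis
  proof (cases i)
    case True
    have d1: "((\<lambda>t. (t, snd x)) has_derivative (\<lambda>h. (h, 0))) (at (fst x))"
      by (auto intro!: derivative_eq_intros)
    have "((\<lambda>t. f (t, snd x)) has_derivative (\<lambda>h. D (h, 0))) (at (fst x))"
      using has_derivative_compose[OF d1, of f D] assms by simp
    moreover have "(\<lambda>h. D (h, 0)) = (\<lambda>h::real. h *\<^sub>R D (1,0))"
    proof
      fix h :: real
      have "(h, 0::real) = h *\<^sub>R (1, 0)" by simp
      then show "D (h, 0) = h *\<^sub>R D (1,0)" by (metis lin linear_scale)
    qed
    ultimately have "((\<lambda>t. f (t, snd x)) has_vector_derivative D (1,0)) (at (fst x))"
      unfolding has_vector_derivative_def by simp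
    then show ?thesis using True by (simp add: pd_def vector_derivative_at)
  next
    case False
    have d1: "((\<lambda>t. (fst x, t)) has_derivative (\<lambda>h. (0, h))) (at (snd x))"
      by (auto intro!: derivative_eq_intros)
    have "((\<lambda>t. f (fst x, t)) has_derivative (\<lambda>h. D (0, h))) (at (snd x))"
      using has_derivative_compose[OF d1, of f D] assms by simp
    moreover have "(\<lambda>h. D (0, h)) = (\<lambda>h::real. h *\<^sub>R D (0,1))"
    proof
      fix h :: real
      have "(0::real, h) = h *\<^sub>R (0, 1)" by simp
      then show "D (0, h) = h *\<^sub>R D (0,1)" by (metis lin linear_scale)
    qed
    ultimately have "((\<lambda>t. f (fst x, t)) has_vector_derivative D (0,1)) (at (snd x))"
      unfolding has_vector_derivative_def by simp
    then show ?thesis using False by (simp add: pd_def vector_derivative_at)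
  qed
qed

lemma pd_add:
  assumes "f differentiable (at x)" "g differentiable (at x)"
  shows "pd i (\<lambda>y. f y + g y) x = pd i f x + pd i g x"
proof -
  obtain Df Dg where f: "(f has_derivative Df) (at x)" and g: "(g has_derivative Dg) (at x)"
    using assms unfolding differentiable_def by blast
  have "((\<lambda>y. f y + g y) has_derivative (\<lambda>h. Df h + Dg h)) (at x)"
    using f g by (rule has_derivative_add)
  then show ?thesis using pd_has_derivative[OF f] pd_has_derivative[OF g] pd_has_derivative[of "\<lambda>y. f y + g y"]
    by simp
qed

lemma pd_scaleR:
  fixes a :: "pt \<Rightarrow> real"
  assumes "a differentiable (at x)" "f differentiable (at x)"
  shows "pd i (\<lambda>y. a y *\<^sub>R f y) x = pd i a x *\<^sub>R f x + a x *\<^sub>R pd i f x"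
proof -
  obtain Da Df where a: "(a has_derivative Da) (at x)" and f: "(f has_derivative Df) (at x)"
    using assms unfolding differentiable_def by blast
  have "((\<lambda>y. a y *\<^sub>R f y) has_derivative (\<lambda>h. a x *\<^sub>R Df h + Da h *\<^sub>R f x)) (at x)"
    using a f by (rule has_derivative_scaleR)
  then show ?thesis using pd_has_derivative[OF f] pd_has_derivative[OF a] pd_has_derivative[of "\<lambda>y. a y *\<^sub>R f y"]
    by (simp add: add.commute)
qed

lemma pd_fst:
  assumes "f differentiable (at x)"
  shows "pd i (\<lambda>y. fst (f y)) x = fst (pd i f x)"
proof -
  obtain Df where f: "(f has_derivative Df) (at x)"
    using assms unfolding differentiable_def by blast
  have "((\<lambda>y. fst (f y)) has_derivative (\<lambda>h. fst (Df h))) (at x)"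
    using f by (rule has_derivative_fst)
  then show ?thesis using pd_has_derivative[OF f] pd_has_derivative[of "\<lambda>y. fst (f y)"] by simp
qed

lemma pd_snd:
  assumes "f differentiable (at x)"
  shows "pd i (\<lambda>y. snd (f y)) x = snd (pd i f x)"
proof -
  obtain Df where f: "(f has_derivative Df) (at x)"
    using assms unfolding differentiable_def by blast
  have "((\<lambda>y. snd (f y)) has_derivative (\<lambda>h. snd (Df h))) (at x)"
    using f by (rule has_derivative_snd)
  then show ?thesis using pd_has_derivative[OF f] pd_has_derivative[of "\<lambda>y. snd (f y)"] by simp
qed

lemma pd_zero_open:
  assumes "open U" "x \<in> U" "\<And>y. y \<in> U \<Longrightarrow> f y = 0"
  shows "pd i f x = 0"
proof -
  have "((\<lambda>y. 0) has_derivative (\<lambda>h. 0)) (at x)" by simp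
  then have "(f has_derivative (\<lambda>h. 0)) (at x)"
    using has_derivative_transform_within_open[of "\<lambda>y. 0" "\<lambda>h. 0" x UNIV U f] assms by simp
  then show ?thesis using pd_has_derivative[of f "\<lambda>h. 0"] by simp
qed

lemma iter_pd_zero:
  assumes "x \<notin> closure {y. f y \<noteq> 0}"
  shows "iter_pd ds f x = 0"
  using assms
proof (induction ds arbitrary: x)
  case Nil then show ?case using closure_subset[of "{y. f y \<noteq> 0}"] by auto
next
  case (Cons i ds)
  show ?case
    using pd_zero_open[of "- closure {y. f y \<noteq> 0}" x "iter_pd ds f" i] Cons by auto
qed


lemma smooth_diff: "smooth f \<Longrightarrow> iter_pd ds f differentiable (at x)"
  unfolding smooth_def differentiable_on_def by blast

definition prodsum :: "(pt \<Rightarrow> real) \<Rightarrow> (pt \<Rightarrow> 'b::real_normed_vector) \<Rightarrow> (bool list \<times> bool list) list \<Rightarrow> pt \<Rightarrow> 'b" where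
  "prodsum a f xs x = (\<Sum>(d1,d2)\<leftarrow>xs. iter_pd d1 a x *\<^sub>R iter_pd d2 f x)"

lemma prodsum_Nil[simp]: "prodsum a f [] = (\<lambda>x. 0)"
  by (auto simp: prodsum_def)

lemma prodsum_Cons: "prodsum a f ((d1,d2) # xs) = (\<lambda>x. iter_pd d1 a x *\<^sub>R iter_pd d2 f x + prodsum a f xs x)"
  by (auto simp: prodsum_def)

lemma prodsum_append: "prodsum a f (xs @ ys) = (\<lambda>x. prodsum a f xs x + prodsum a f ys x)"
  by (auto simp: prodsum_def)

lemma prodsum_diff:
  assumes "smooth a" "smooth f"
  shows "prodsum a f xs differentiable (at x)"
proof (induction xs)
  case Nil then show ?case by simp
next
  case (Cons p xs)
  obtain d1 d2 where p: "p = (d1, d2)" by fastforce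
  have "(\<lambda>x. iter_pd d1 a x *\<^sub>R iter_pd d2 f x) differentiable (at x)"
    using smooth_diff[OF assms(1)] smooth_diff[OF assms(2)] by (rule differentiable_scaleR)
  then show ?case unfolding p prodsum_Cons using Cons by (rule differentiable_add)
qed

definition pstep :: "bool \<Rightarrow> (bool list \<times> bool list) list \<Rightarrow> (bool list \<times> bool list) list" where
  "pstep i xs = concat (map (\<lambda>(d1,d2). [(i#d1,d2),(d1,i#d2)]) xs)"

lemma pd_prodsum:
  assumes "smooth a" "smooth f"
  shows "pd i (prodsum a f xs) x = prodsum a f (pstep i xs) x"
proof (induction xs)
  case Nil then show ?case
    by (simp add: pstep_def pd_zero_open[of UNIV])
next
  case (Cons p xs)
  obtain d1 d2 where p: "p = (d1, d2)" by fastforce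
  have "pd i (prodsum a f (p # xs)) x = pd i (\<lambda>x. iter_pd d1 a x *\<^sub>R iter_pd d2 f x) x + pd i (prodsum a f xs) x"
    unfolding p prodsum_Cons
    by (rule pd_add) (auto intro!: differentiable_scaleR smooth_diff assms prodsum_diff)
  also have "pd i (\<lambda>x. iter_pd d1 a x *\<^sub>R iter_pd d2 f x) x = iter_pd (i#d1) a x *\<^sub>R iter_pd d2 f x + iter_pd d1 a x *\<^sub>R iter_pd (i#d2) f x"
    by (simp add: pd_scaleR smooth_diff assms)
  finally show ?case using Cons by (simp add: p pstep_def prodsum_append prodsum_Cons)
qed

lemma iter_pd_prod:
  assumes "smooth a" "smooth f"
  shows "\<exists>xs. iter_pd ds (\<lambda>x. a x *\<^sub>R f x) = prodsum a f xs"
proof (induction ds)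
  case Nil
  show ?case by (rule exI[of _ "[([],[])]"]) (simp add: prodsum_Cons)
next
  case (Cons i ds)
  then obtain xs where "iter_pd ds (\<lambda>x. a x *\<^sub>R f x) = prodsum a f xs" by blast
  then show ?case using pd_prodsum[OF assms] by auto
qed

lemma smooth_prod:
  assumes "smooth a" "smooth f"
  shows "smooth (\<lambda>x. a x *\<^sub>R f x)"
  unfolding smooth_def differentiable_on_def
  using iter_pd_prod[OF assms] prodsum_diff[OF assms] by metis


lemma smooth_cont: "smooth f \<Longrightarrow> continuous_on UNIV (iter_pd ds f)"
  unfolding smooth_def using differentiable_imp_continuous_on by blast

lemma smooth_cont0: "smooth f \<Longrightarrow> continuous_on UNIV f"
  using smooth_cont[of f "[]"] by simp

lemma dirac_alt:
  assumes "smooth f"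
  shows "dirac b f = (\<lambda>x. (- \<i> * snd (pd True f x) + complex_of_real (b * snd x) * snd (f x) - snd (pd False f x),
       - \<i> * fst (pd True f x) + complex_of_real (b * snd x) * fst (f x) + fst (pd False f x)))"
proof
  fix x
  have d: "f differentiable (at x)" using smooth_diff[OF assms, of "[]"] by simp
  show "dirac b f x = (- \<i> * snd (pd True f x) + complex_of_real (b * snd x) * snd (f x) - snd (pd False f x),
       - \<i> * fst (pd True f x) + complex_of_real (b * snd x) * fst (f x) + fst (pd False f x))"
    unfolding dirac_def Let_def using pd_fst[OF d] pd_snd[OF d] by simp
qed

lemma dirac_cont:
  assumes "smooth f"
  shows "continuous_on UNIV (dirac b f)"
proof -
  have c0: "continuous_on UNIV f" using smooth_cont0[OF assms] .
  have c1: "continuous_on UNIV (pd i f)" for i using smooth_cont[OF assms, of "[i]"] by simp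
  show ?thesis unfolding dirac_alt[OF assms]
    by (intro continuous_intros c0 c1)
qed

definition Mt :: "real \<Rightarrow> real \<Rightarrow> spinor \<Rightarrow> spinor" where
  "Mt a c w = (- \<i> * complex_of_real a * snd w - complex_of_real c * snd w,
               - \<i> * complex_of_real a * fst w + complex_of_real c * fst w)"

lemma norm_Mt: "(norm (Mt a c w))\<^sup>2 = (a\<^sup>2 + c\<^sup>2) * (norm w)\<^sup>2"
proof -
  have e: "Mt a c w = (- Complex c a * snd w, Complex c (-a) * fst w)"
    unfolding Mt_def by (simp add: Complex_eq algebra_simps)
  have "(norm (Mt a c w))\<^sup>2 = (cmod (Complex c a))\<^sup>2 * (cmod (snd w))\<^sup>2 + (cmod (Complex c (-a)))\<^sup>2 * (cmod (fst w))\<^sup>2"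
    unfolding e norm_Pair by (simp add: norm_mult power_mult_distrib)
  also have "\<dots> = (a\<^sup>2 + c\<^sup>2) * (norm w)\<^sup>2"
  proof -
    have "(norm w)\<^sup>2 = (cmod (fst w))\<^sup>2 + (cmod (snd w))\<^sup>2" by (cases w) (simp add: norm_Pair)
    then show ?thesis by (simp add: complex_norm algebra_simps)
  qed
  finally show ?thesis .
qed

lemma Mt_diff: "Mt a c w - Mt a c w' = Mt a c (w - w')"
  unfolding Mt_def by (simp add: algebra_simps)

lemma dirac_prod:
  assumes "smooth eta" "smooth f"
  shows "dirac b (\<lambda>x. eta x *\<^sub>R f x) x = eta x *\<^sub>R dirac b f x + Mt (pd True eta x) (pd False eta x) (f x)"
proof -
  have de: "eta differentiable (at x)" using smooth_diff[OF assms(1), of "[]"] by simp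
  have df: "f differentiable (at x)" using smooth_diff[OF assms(2), of "[]"] by simp
  have du: "(\<lambda>y. fst (f y)) differentiable (at x)" using df by (rule differentiable_compose[OF bounded_linear_fst[THEN bounded_linear_imp_differentiable]])
  have dv: "(\<lambda>y. snd (f y)) differentiable (at x)" using df by (rule differentiable_compose[OF bounded_linear_snd[THEN bounded_linear_imp_differentiable]])
  have u: "(\<lambda>y. fst (eta y *\<^sub>R f y)) = (\<lambda>y. eta y *\<^sub>R fst (f y))" by simp
  have v: "(\<lambda>y. snd (eta y *\<^sub>R f y)) = (\<lambda>y. eta y *\<^sub>R snd (f y))" by simp
  show ?thesis
    unfolding dirac_def Let_def u v pd_scaleR[OF de du] pd_scaleR[OF de dv] Mt_def
    by (simp add: scaleR_conv_of_real algebra_simps)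
qed


lemma real_bound:
  fixes r P Q :: "pt \<Rightarrow> real"
  assumes S: "S \<in> sets lborel" and rm: "r \<in> borel_measurable lborel"
    and P: "integrable lborel P" and Q: "integrable lborel Q"
    and ab: "\<alpha> \<ge> 0" "\<beta> \<ge> 0"
    and r0: "\<And>x. 0 \<le> r x" and P0: "\<And>x. 0 \<le> P x" and Q0: "\<And>x. 0 \<le> Q x"
    and bd: "\<And>x. r x \<le> \<alpha> * P x + \<beta> * Q x"
  shows "set_integrable lborel S r"
    and "set_lebesgue_integral lborel S r \<le> \<alpha> * integral\<^sup>L lborel P + \<beta> * integral\<^sup>L lborel Q"
    and "0 \<le> set_lebesgue_integral lborel S r"
proof -
  have I: "integrable lborel (\<lambda>x. \<alpha> * P x + \<beta> * Q x)" using P Q by auto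
  have m: "(\<lambda>x. indicator S x *\<^sub>R r x) \<in> borel_measurable lborel"
    using S rm by measurable
  have le: "indicator S x *\<^sub>R r x \<le> \<alpha> * P x + \<beta> * Q x" for x
    using r0[of x] bd[of x] by (cases "x \<in> S") auto
  have nn: "0 \<le> indicator S x *\<^sub>R r x" for x using r0[of x] by (cases "x \<in> S") auto
  show si: "set_integrable lborel S r"
    unfolding set_integrable_def
  proof (rule Bochner_Integration.integrable_bound[OF I m])
    show "AE x in lborel. norm (indicator S x *\<^sub>R r x) \<le> norm (\<alpha> * P x + \<beta> * Q x)"
      using le nn ab P0 Q0 by (auto intro!: AE_I2 simp del: real_scaleR_def)
  qed
  have "set_lebesgue_integral lborel S r \<le> integral\<^sup>L lborel (\<lambda>x. \<alpha> * P x + \<beta> * Q x)"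
    unfolding set_lebesgue_integral_def using si I le
    by (intro integral_mono) (auto simp: set_integrable_def simp del: real_scaleR_def)
  also have "\<dots> = \<alpha> * integral\<^sup>L lborel P + \<beta> * integral\<^sup>L lborel Q"
    using P Q by simp
  finally show "set_lebesgue_integral lborel S r \<le> \<alpha> * integral\<^sup>L lborel P + \<beta> * integral\<^sup>L lborel Q" .
  show "0 \<le> set_lebesgue_integral lborel S r"
    unfolding set_lebesgue_integral_def using nn by (intro integral_nonneg_AE) (auto simp del: real_scaleR_def)
qed

lemma l2conv_bound:
  fixes F fs gs :: "nat \<Rightarrow> pt \<Rightarrow> spinor" and H f g :: "pt \<Rightarrow> spinor"
  assumes S: "S \<in> sets lborel"
    and m: "\<And>n. (\<lambda>x. F n x - H x) \<in> borel_measurable lborel"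
    and cf: "l2conv UNIV fs f" and cg: "l2conv UNIV gs g"
    and ab: "\<alpha> \<ge> 0" "\<beta> \<ge> 0"
    and bd: "\<And>n x. (norm (F n x - H x))\<^sup>2 \<le> \<alpha> * (norm (fs n x - f x))\<^sup>2 + \<beta> * (norm (gs n x - g x))\<^sup>2"
  shows "l2conv S F H"
proof -
  have If: "integrable lborel (\<lambda>x. (norm (fs n x - f x))\<^sup>2)" for n
    using cf unfolding l2conv_def set_integrable_def by simp
  have Ig: "integrable lborel (\<lambda>x. (norm (gs n x - g x))\<^sup>2)" for n
    using cg unfolding l2conv_def set_integrable_def by simp
  have Lf: "(\<lambda>n. integral\<^sup>L lborel (\<lambda>x. (norm (fs n x - f x))\<^sup>2)) \<longlonglongrightarrow> 0"
    using cf unfolding l2conv_def set_lebesgue_integral_def by simp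
  have Lg: "(\<lambda>n. integral\<^sup>L lborel (\<lambda>x. (norm (gs n x - g x))\<^sup>2)) \<longlonglongrightarrow> 0"
    using cg unfolding l2conv_def set_lebesgue_integral_def by simp
  have mr: "(\<lambda>x. (norm (F n x - H x))\<^sup>2) \<in> borel_measurable lborel" for n
    using m[of n] by measurable
  note rb = real_bound[OF S mr If Ig ab, of n n n for n, OF _ _ _ bd]
  have L: "(\<lambda>n. \<alpha> * integral\<^sup>L lborel (\<lambda>x. (norm (fs n x - f x))\<^sup>2) + \<beta> * integral\<^sup>L lborel (\<lambda>x. (norm (gs n x - g x))\<^sup>2)) \<longlonglongrightarrow> 0"
    using tendsto_add[OF tendsto_mult_right_zero[OF Lf] tendsto_mult_right_zero[OF Lg]] by simp
  show ?thesis unfolding l2conv_def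
  proof (intro conjI allI)
    show "set_integrable lborel S (\<lambda>x. (norm (F n x - H x))\<^sup>2)" for n using rb(1) by simp
    show "(\<lambda>n. set_lebesgue_integral lborel S (\<lambda>x. (norm (F n x - H x))\<^sup>2)) \<longlonglongrightarrow> 0"
      by (rule tendsto_sandwich[OF _ _ tendsto_const L]) (use rb(2,3) in auto)
  qed
qed

lemma L2_bound:
  fixes h p q :: "pt \<Rightarrow> spinor"
  assumes S: "S \<in> sets lborel" and m: "h \<in> borel_measurable lborel"
    and p: "L2 UNIV p" and q: "L2 UNIV q" and ab: "\<alpha> \<ge> 0" "\<beta> \<ge> 0"
    and bd: "\<And>x. (norm (h x))\<^sup>2 \<le> \<alpha> * (norm (p x))\<^sup>2 + \<beta> * (norm (q x))\<^sup>2"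
  shows "L2 S h"
proof -
  have Ip: "integrable lborel (\<lambda>x. (norm (p x))\<^sup>2)" using p unfolding L2_def set_integrable_def by simp
  have Iq: "integrable lborel (\<lambda>x. (norm (q x))\<^sup>2)" using q unfolding L2_def set_integrable_def by simp
  have mr: "(\<lambda>x. (norm (h x))\<^sup>2) \<in> borel_measurable lborel" using m by measurable
  show ?thesis unfolding L2_def
  proof
    show "set_borel_measurable lborel S h" unfolding set_borel_measurable_def using S m by measurable
    show "set_integrable lborel S (\<lambda>x. (norm (h x))\<^sup>2)"
      by (rule real_bound(1)[OF S mr Ip Iq ab _ _ _ bd]) auto
  qed
qed




lemma inM_prod:
  assumes se: "smooth eta" and c: "C0inf phi" and e0: "\<And>x1. eta (x1, 0) = 0"
  shows "inM (\<lambda>x. eta x *\<^sub>R phi x)" "C0inf (\<lambda>x. eta x *\<^sub>R phi x)"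
proof -
  define P where "P = (\<lambda>x. eta x *\<^sub>R phi x)"
  have sphi: "smooth phi" and bphi: "bounded {x. phi x \<noteq> 0}" using c unfolding C0inf_def by auto
  have sP: "smooth P" unfolding P_def by (rule smooth_prod[OF se sphi])
  define K where "K = closure {x. phi x \<noteq> 0}"
  have cK: "compact K" unfolding K_def using bphi by (simp add: compact_eq_bounded_closed bounded_closure)
  have sub: "{x. P x \<noteq> 0} \<subseteq> {x. phi x \<noteq> 0}" unfolding P_def by auto
  then have bP: "bounded {x. P x \<noteq> 0}" using bphi bounded_subset by blast
  have zero: "x \<notin> K \<Longrightarrow> iter_pd ds P x = 0" for x ds
    using iter_pd_zero[of x P ds] closure_mono[OF sub] unfolding K_def by blast
  obtain R where R: "\<And>x. x \<in> K \<Longrightarrow> norm x \<le> R"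
    using compact_imp_bounded[OF cK] unfolding bounded_iff by blast
  have bd: "\<exists>B\<ge>0. \<forall>x. norm (iter_pd ds P x) \<le> B \<and> (x \<notin> K \<longrightarrow> iter_pd ds P x = 0)" for ds
  proof -
    have cc: "compact (iter_pd ds P ` K)"
      using compact_continuous_image[OF continuous_on_subset[OF smooth_cont[OF sP] subset_UNIV] cK] .
    then obtain B where B: "\<And>y. y \<in> iter_pd ds P ` K \<Longrightarrow> norm y \<le> B"
      using compact_imp_bounded[OF cc] unfolding bounded_iff by blast
    have "norm (iter_pd ds P x) \<le> max B 0" for x
    proof (cases "x \<in> K")
      case True then show ?thesis using B[of "iter_pd ds P x"] by auto
    next
      case False then show ?thesis using zero[OF False] by simp
    qed
    then show ?thesis using zero by (intro exI[of _ "max B 0"]) auto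
  qed
  show "inM (\<lambda>x. eta x *\<^sub>R phi x)"
    unfolding inM_def schwartz_def P_def[symmetric]
  proof (intro conjI allI sP)
    fix ds k
    obtain B where B0: "B \<ge> 0" and B: "\<And>x. norm (iter_pd ds P x) \<le> B"
      and Z: "\<And>x. x \<notin> K \<Longrightarrow> iter_pd ds P x = 0" using bd[of ds] by blast
    show "\<exists>C. \<forall>x. (1 + norm x) ^ k * norm (iter_pd ds P x) \<le> C"
    proof (intro exI[of _ "(1 + max R 0) ^ k * B"] allI)
      fix x
      show "(1 + norm x) ^ k * norm (iter_pd ds P x) \<le> (1 + max R 0) ^ k * B"
      proof (cases "x \<in> K")
        case True
        have "(1 + norm x) ^ k \<le> (1 + max R 0) ^ k"
          using R[OF True] by (intro power_mono) auto
        then show ?thesis using B[of x] B0 by (intro mult_mono) auto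
      next
        case False then show ?thesis using Z[OF False] B0 by simp
      qed
    qed
  next
    fix x1 show "fst (P (x1, 0)) = snd (P (x1, 0))" unfolding P_def using e0 by simp
  next
    fix ds
    obtain B where B0: "B \<ge> 0" and B: "\<And>x. norm (iter_pd ds P x) \<le> B"
      and Z: "\<And>x. x \<notin> K \<Longrightarrow> iter_pd ds P x = 0" using bd[of ds] by blast
    have "\<forall>x\<in>halfplane. norm (iter_pd ds P x) \<le> (B + 1) * exp (max R 0) * exp (- 1 * norm x)"
    proof
      fix x
      show "norm (iter_pd ds P x) \<le> (B + 1) * exp (max R 0) * exp (- 1 * norm x)"
      proof (cases "x \<in> K")
        case True
        have "0 \<le> max R 0 + (- 1 * norm x)" using R[OF True] by simp
        then have "1 \<le> exp (max R 0 + (- 1 * norm x))" by simp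
        then have "1 \<le> exp (max R 0) * exp (- 1 * norm x)"
          by (simp only: exp_add)
        then have "B * 1 \<le> (B + 1) * (exp (max R 0) * exp (- 1 * norm x))"
          using B0 by (intro mult_mono) auto
        then show ?thesis using B[of x] by (simp add: mult.assoc)
      next
        case False then show ?thesis using Z[OF False] B0 by simp
      qed
    qed
    moreover have "0 < (B + 1) * exp (max R 0)" using B0 by simp
    ultimately show "\<exists>c>0. \<exists>C>0. \<forall>x\<in>halfplane. norm (iter_pd ds P x) \<le> C * exp (- c * norm x)"
      by (metis zero_less_one)
  qed
  show "C0inf (\<lambda>x. eta x *\<^sub>R phi x)" unfolding C0inf_def P_def[symmetric] using sP bP by simp
qed



lemma cont_meas: "continuous_on UNIV f \<Longrightarrow> f \<in> borel_measurable lborel"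
  using borel_measurable_continuous_onI by (simp add: measurable_lborel1)

lemma halfplane_sets: "halfplane \<in> sets lborel"
proof -
  have "closed halfplane" unfolding halfplane_def by (intro closed_Collect_le continuous_intros)
  then show ?thesis using borel_closed by simp
qed

lemma norm_add_sq: "(norm (u + v))\<^sup>2 \<le> 2 * (norm u)\<^sup>2 + 2 * (norm (v::'a::real_normed_vector))\<^sup>2"
proof -
  have "norm (u + v) \<le> norm u + norm v" by (rule norm_triangle_ineq)
  then have "(norm (u + v))\<^sup>2 \<le> (norm u + norm v)\<^sup>2" by (intro power_mono) auto
  also have "\<dots> \<le> 2 * (norm u)\<^sup>2 + 2 * (norm v)\<^sup>2"
  proof -
    have h: "0 \<le> (norm u - norm v)\<^sup>2" by simp
    have e1: "(norm u + norm v)\<^sup>2 = (norm u)\<^sup>2 + 2 * norm u * norm v + (norm v)\<^sup>2" by (simp add: power2_sum)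
    have e2: "(norm u - norm v)\<^sup>2 = (norm u)\<^sup>2 - 2 * norm u * norm v + (norm v)\<^sup>2" by (simp add: power2_diff)
    show ?thesis using h e1 e2 by linarith
  qed
  finally show ?thesis .
qed

lemma norm_scale_sq: "\<bar>t\<bar> \<le> 1 \<Longrightarrow> (norm (t *\<^sub>R w))\<^sup>2 \<le> (norm w)\<^sup>2"
  by (simp add: power_mult_distrib abs_square_le_1 mult_left_le_one_le)


theorem proposition4p1:
  fixes b L :: real and eta :: "pt \<Rightarrow> real" and psi g :: "pt \<Rightarrow> spinor"
  assumes "b \<ge> 0" and "L \<ge> 1"
    and "smooth eta"
    and "\<forall>x. eta x \<in> {0..1}"
    and "\<forall>x y. snd x = snd y \<longrightarrow> eta x = eta y"
    and "\<forall>ds. bounded (range (iter_pd ds eta))"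
    and "closure {x. eta x \<noteq> 0} \<subseteq> {x. snd x > sqrt L / 4}"
    and "Hb_graph b psi g"
  shows "\<exists>h. Hb_graph b (\<lambda>x. eta x *\<^sub>R psi x) h \<and>
             HbE_graph b (\<lambda>x. eta x *\<^sub>R psi x) h"
proof -
  note se = assms(3)
  have psiL: "L2 UNIV psi" and gL: "L2 UNIV g" using assms(8) unfolding Hb_graph_def by auto
  obtain phi where phiC: "\<And>n. C0inf (phi n)" and cphi: "l2conv UNIV phi psi"
    and cdphi: "l2conv UNIV (\<lambda>n. dirac b (phi n)) g"
    using assms(8) unfolding Hb_graph_def by blast
  have sphi: "smooth (phi n)" for n using phiC[of n] unfolding C0inf_def by simp
  have e0: "eta (x1, 0) = 0" for x1
  proof (rule ccontr)
    assume "eta (x1, 0) \<noteq> 0"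
    then have "(x1, 0) \<in> closure {x. eta x \<noteq> 0}" using closure_subset[of "{x. eta x \<noteq> 0}"] by blast
    then have "snd (x1, 0::real) > sqrt L / 4" using assms(7) by blast
    then show False using assms(2) by simp
  qed
  have eta1: "\<bar>eta x\<bar> \<le> 1" for x using assms(4)[rule_format, of x] by auto
  define a where "a = pd True eta"
  define c where "c = pd False eta"
  obtain K1 where K1: "\<And>x. \<bar>a x\<bar> \<le> K1"
    using assms(6)[rule_format, of "[True]"] unfolding bounded_iff a_def by auto
  obtain K2 where K2: "\<And>x. \<bar>c x\<bar> \<le> K2"
    using assms(6)[rule_format, of "[False]"] unfolding bounded_iff c_def by auto
  define KK where "KK = K1\<^sup>2 + K2\<^sup>2"
  have KK0: "KK \<ge> 0" unfolding KK_def by simp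
  have KKb: "(a x)\<^sup>2 + (c x)\<^sup>2 \<le> KK" for x
  proof -
    have "\<bar>a x\<bar>\<^sup>2 \<le> K1\<^sup>2" using K1[of x] by (intro power_mono) auto
    moreover have "\<bar>c x\<bar>\<^sup>2 \<le> K2\<^sup>2" using K2[of x] by (intro power_mono) auto
    ultimately show ?thesis unfolding KK_def by simp
  qed
  have Mtb: "(norm (Mt (a x) (c x) w))\<^sup>2 \<le> KK * (norm w)\<^sup>2" for x w
    unfolding norm_Mt by (intro mult_right_mono KKb) simp
  define h where "h = (\<lambda>x. eta x *\<^sub>R g x + Mt (a x) (c x) (psi x))"
  define F where "F = (\<lambda>n x. eta x *\<^sub>R phi n x)"
  have sF: "smooth (F n)" for n unfolding F_def by (rule smooth_prod[OF se sphi])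
  have dF: "dirac b (F n) x = eta x *\<^sub>R dirac b (phi n) x + Mt (a x) (c x) (phi n x)" for n x
    unfolding F_def a_def c_def by (rule dirac_prod[OF se sphi])
  have mpsi: "psi \<in> borel_measurable lborel" using psiL unfolding L2_def set_borel_measurable_def by simp
  have mg: "g \<in> borel_measurable lborel" using gL unfolding L2_def set_borel_measurable_def by simp
  have meta: "eta \<in> borel_measurable lborel" by (rule cont_meas[OF smooth_cont0[OF se]])
  have ma: "a \<in> borel_measurable lborel" unfolding a_def using cont_meas[OF smooth_cont[OF se, of "[True]"]] by simp
  have mc: "c \<in> borel_measurable lborel" unfolding c_def using cont_meas[OF smooth_cont[OF se, of "[False]"]] by simp
  have mMt: "(\<lambda>x. Mt (a x) (c x) (f x)) \<in> borel_measurable lborel" if "f \<in> borel_measurable lborel" for f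
  proof -
    have f1: "(\<lambda>x. fst (f x)) \<in> borel_measurable lborel"
      by (rule borel_measurable_continuous_on[OF continuous_on_fst[OF continuous_on_id] that])
    have f2: "(\<lambda>x. snd (f x)) \<in> borel_measurable lborel"
      by (rule borel_measurable_continuous_on[OF continuous_on_snd[OF continuous_on_id] that])
    show ?thesis unfolding Mt_def using f1 f2 ma mc by measurable
  qed
  have mh: "h \<in> borel_measurable lborel" unfolding h_def
    using meta mg mMt[OF mpsi] by measurable
  have mepsi: "(\<lambda>x. eta x *\<^sub>R psi x) \<in> borel_measurable lborel" using meta mpsi by measurable
  have mF: "F n \<in> borel_measurable lborel" for n by (rule cont_meas[OF smooth_cont0[OF sF]])
  have mdF: "dirac b (F n) \<in> borel_measurable lborel" for n by (rule cont_meas[OF dirac_cont[OF sF]])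
  have b1: "(norm (F n x - eta x *\<^sub>R psi x))\<^sup>2 \<le> 1 * (norm (phi n x - psi x))\<^sup>2 + 0 * (norm (phi n x - psi x))\<^sup>2" for n x
  proof -
    have "F n x - eta x *\<^sub>R psi x = eta x *\<^sub>R (phi n x - psi x)" unfolding F_def by (simp add: algebra_simps)
    then show ?thesis using norm_scale_sq[OF eta1[of x]] by simp
  qed
  have b2: "(norm (dirac b (F n) x - h x))\<^sup>2 \<le> 2 * (norm (dirac b (phi n) x - g x))\<^sup>2 + (2 * KK) * (norm (phi n x - psi x))\<^sup>2" for n x
  proof -
    have eq: "dirac b (F n) x - h x = eta x *\<^sub>R (dirac b (phi n) x - g x) + Mt (a x) (c x) (phi n x - psi x)"
      unfolding dF h_def Mt_diff[symmetric] by (simp add: algebra_simps)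
    have "(norm (dirac b (F n) x - h x))\<^sup>2 \<le> 2 * (norm (eta x *\<^sub>R (dirac b (phi n) x - g x)))\<^sup>2 + 2 * (norm (Mt (a x) (c x) (phi n x - psi x)))\<^sup>2"
      unfolding eq by (rule norm_add_sq)
    then have "(norm (dirac b (F n) x - h x))\<^sup>2 \<le> 2 * (norm (dirac b (phi n) x - g x))\<^sup>2 + 2 * (KK * (norm (phi n x - psi x))\<^sup>2)"
      using norm_scale_sq[OF eta1[of x], of "dirac b (phi n) x - g x"] Mtb[of x "phi n x - psi x"]
      by linarith
    then show ?thesis by (simp add: mult.assoc)
  qed
  have b3: "(norm (eta x *\<^sub>R psi x))\<^sup>2 \<le> 1 * (norm (psi x))\<^sup>2 + 0 * (norm (psi x))\<^sup>2" for x
    using norm_scale_sq[OF eta1[of x]] by simp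
  have b4: "(norm (h x))\<^sup>2 \<le> 2 * (norm (g x))\<^sup>2 + (2 * KK) * (norm (psi x))\<^sup>2" for x
  proof -
    have "(norm (h x))\<^sup>2 \<le> 2 * (norm (eta x *\<^sub>R g x))\<^sup>2 + 2 * (norm (Mt (a x) (c x) (psi x)))\<^sup>2"
      unfolding h_def by (rule norm_add_sq)
    then have "(norm (h x))\<^sup>2 \<le> 2 * (norm (g x))\<^sup>2 + 2 * (KK * (norm (psi x))\<^sup>2)"
      using norm_scale_sq[OF eta1[of x], of "g x"] Mtb[of x "psi x"] by linarith
    then show ?thesis by (simp add: mult.assoc)
  qed
  have mdiff1: "(\<lambda>x. F n x - eta x *\<^sub>R psi x) \<in> borel_measurable lborel" for n
    using mF[of n] mepsi by measurable
  have mdiff2: "(\<lambda>x. dirac b (F n) x - h x) \<in> borel_measurable lborel" for n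
    using mdF[of n] mh by measurable
  have conv1: "l2conv S F (\<lambda>x. eta x *\<^sub>R psi x)" if "S \<in> sets lborel" for S
    by (rule l2conv_bound[OF that mdiff1 cphi cphi _ _ b1]) auto
  have conv2: "l2conv S (\<lambda>n. dirac b (F n)) h" if "S \<in> sets lborel" for S
    by (rule l2conv_bound[OF that mdiff2 cdphi cphi _ _ b2]) (use KK0 in auto)
  have L1: "L2 S (\<lambda>x. eta x *\<^sub>R psi x)" if "S \<in> sets lborel" for S
    by (rule L2_bound[OF that mepsi psiL psiL _ _ b3]) auto
  have L2h: "L2 S h" if "S \<in> sets lborel" for S
    by (rule L2_bound[OF that mh gL psiL _ _ b4]) (use KK0 in auto)
  have FC: "C0inf (F n)" and FM: "inM (F n)" for n
    unfolding F_def using inM_prod[OF se phiC e0] by auto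
  have "Hb_graph b (\<lambda>x. eta x *\<^sub>R psi x) h"
    unfolding Hb_graph_def using L1[of UNIV] L2h[of UNIV] FC conv1[of UNIV] conv2[of UNIV] by auto
  moreover have "HbE_graph b (\<lambda>x. eta x *\<^sub>R psi x) h"
    unfolding HbE_graph_def using L1[OF halfplane_sets] L2h[OF halfplane_sets] FM conv1[OF halfplane_sets] conv2[OF halfplane_sets] by auto
  ultimately show ?thesis by blast
qed


end
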